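(* Let $e\in K\setminus\{0\}$ and $f=\|\cdot\|e:X\to Y$. Then $D_{X^*}e\subset\widehat\partial f(0)$, where $D_{X^*}e=\{x^*(\cdot)e: x^*\in D_{X^*}\}$, and for every $y^*\in K_e^+$, $$y^*(\widehat\partial f(0))\subset y^*(e)D_{X^*}.$$
   Context: $X,Y$ are real normed spaces with duals $X^*,Y^*$; $D_{X^*}$ is the closed unit ball of $X^*$; $B(X,Y)$ is the space of bounded linear operators $X\to Y$; $B(x,\delta)$ is the open ball and $D_Y$ the closed unit ball of $Y$. $K\subset Y$ is a pointed closed convex cone, $K^+=\{y^*\in Y^*: y^*(k)\ge0\ \forall k\in K\}$, and $K_e^+=\{y^*\in K^+: y^*(e)\neq0\}$. For $f:X\to Y$, $\widehat\partial f(\bar x)$ is the set of all $T\in B(X,Y)$ such that for every $\varepsilon>0$ there is $\delta>0$ with $f(x)+K\subset f(\bar x)+K+T(x-\bar x)+\varepsilon\|x-\bar x\|D_Y$ for all $x\in B(\bar x,\delta)$. For $\mathcal T\subset B(X,Y)$, $y^*(\mathcal T)=\{y^*\circ T:T\in\mathcal T\}\subset X^*$. *)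

theory Defs
  imports "HOL-Analysis.Analysis"
begin

definition dual_unit_ball :: "('a::real_normed_vector \<Rightarrow> real) set" where
  "dual_unit_ball = {xs. bounded_linear xs \<and> onorm xs \<le> 1}"

definition pointed_closed_convex_cone :: "'b::real_normed_vector set \<Rightarrow> bool" where
  "pointed_closed_convex_cone K \<longleftrightarrow> closed K \<and> convex K \<and> cone K \<and> K \<noteq> {}
     \<and> K \<inter> uminus ` K = {0}"

definition dual_cone :: "'b::real_normed_vector set \<Rightarrow> ('b \<Rightarrow> real) set" where
  "dual_cone K = {ys. bounded_linear ys \<and> (\<forall>k\<in>K. ys k \<ge> 0)}"

definition dual_cone_e :: "'b::real_normed_vector set \<Rightarrow> 'b \<Rightarrow> ('b \<Rightarrow> real) set" where
  "dual_cone_e K e = {ys \<in> dual_cone K. ys e \<noteq> 0}"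

definition frechet_subdiff ::
  "'b::real_normed_vector set \<Rightarrow> ('a::real_normed_vector \<Rightarrow> 'b) \<Rightarrow> 'a \<Rightarrow> ('a \<Rightarrow> 'b) set" where
  "frechet_subdiff K f xb = {T. bounded_linear T \<and>
     (\<forall>\<epsilon>>0. \<exists>\<delta>>0. \<forall>x\<in>ball xb \<delta>.
        (\<lambda>k. f x + k) ` K \<subseteq>
        {f xb + k + T (x - xb) + (\<epsilon> * norm (x - xb)) *\<^sub>R d | k d. k \<in> K \<and> norm d \<le> 1})}"

end

theory Submission
  imports Defs
begin

lemma key_bound:
  fixes K :: "'b::real_normed_vector set" and e :: 'b and T :: "'a::real_normed_vector \<Rightarrow> 'b"
  assumes K: "pointed_closed_convex_cone K" and eK: "e \<in> K"
    and T: "T \<in> frechet_subdiff K (\<lambda>x::'a. norm x *\<^sub>R e) 0"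
    and ys: "ys \<in> dual_cone K"
  shows "ys (T x) \<le> ys e * norm x"
proof -
  have blT: "bounded_linear T" using T by (simp add: frechet_subdiff_def)
  have blys: "bounded_linear ys" and ysK: "\<And>k. k \<in> K \<Longrightarrow> ys k \<ge> 0"
    using ys by (auto simp: dual_cone_def)
  interpret T: bounded_linear T by fact
  interpret Y: bounded_linear ys by fact
  have coneK: "cone K" and neK: "K \<noteq> {}" using K by (auto simp: pointed_closed_convex_cone_def)
  have zK: "0 \<in> K" using coneK neK unfolding cone_def by (metis ex_in_conv scaleR_zero_left order_refl)
  define B where "B = onorm ys"
  have B0: "B \<ge> 0" unfolding B_def by (rule onorm_pos_le[OF blys])
  have yd: "ys d \<ge> - B" if "norm d \<le> 1" for d
  proof -
    have "\<bar>ys d\<bar> \<le> B * norm d" using onorm[OF blys, of d] by (simp add: B_def)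
    also have "\<dots> \<le> B" using B0 that by (simp add: mult_left_le)
    finally show ?thesis by linarith
  qed
  show ?thesis
  proof (cases "x = 0")
    case True then show ?thesis by (simp add: T.zero Y.zero)
  next
    case False
    hence nx: "norm x > 0" by simp
    show ?thesis
    proof (rule field_le_epsilon)
      fix \<epsilon> :: real assume ep: "\<epsilon> > 0"
      define \<epsilon>' where "\<epsilon>' = \<epsilon> / ((B+1) * norm x)"
      have ep': "\<epsilon>' > 0" unfolding \<epsilon>'_def using ep nx B0 by simp
      obtain \<delta> where dp: "\<delta> > 0" and H: "\<forall>z\<in>ball 0 \<delta>.
        (\<lambda>k. norm z *\<^sub>R e + k) ` K \<subseteq>
        {norm (0::'a) *\<^sub>R e + k + T (z - 0) + (\<epsilon>' * norm (z - 0)) *\<^sub>R d | k d. k \<in> K \<and> norm d \<le> 1}"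
        using T ep' unfolding frechet_subdiff_def by blast
      define t where "t = \<delta> / (2 * norm x)"
      have t0: "t > 0" unfolding t_def using dp nx by simp
      define z where "z = t *\<^sub>R x"
      have nz: "norm z = t * norm x" unfolding z_def using t0 by simp
      have "norm z = \<delta>/2" unfolding nz t_def using nx by simp
      hence zb: "z \<in> ball 0 \<delta>" using dp by simp
      have "norm z *\<^sub>R e + 0 \<in> (\<lambda>k. norm z *\<^sub>R e + k) ` K" using zK by blast
      with H zb obtain k d where kK: "k \<in> K" and nd: "norm d \<le> 1" and
        eq: "norm z *\<^sub>R e + 0 = norm (0::'a) *\<^sub>R e + k + T (z - 0) + (\<epsilon>' * norm (z - 0)) *\<^sub>R d"
        by blast
      have "ys (norm z *\<^sub>R e) = ys k + ys (T z) + (\<epsilon>' * norm z) * ys d"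
        using arg_cong[OF eq, of ys] by (simp add: Y.add Y.scale)
      hence "norm z * ys e = ys k + ys (T z) + (\<epsilon>' * norm z) * ys d" by (simp add: Y.scale)
      moreover have "ys k \<ge> 0" using ysK kK by simp
      moreover have "(\<epsilon>' * norm z) * ys d \<ge> (\<epsilon>' * norm z) * (-B)"
        using yd[OF nd] ep' by (intro mult_left_mono) auto
      ultimately have "ys (T z) \<le> norm z * ys e + \<epsilon>' * norm z * B" by linarith
      moreover have "ys (T z) = t * ys (T x)" unfolding z_def by (simp add: T.scale Y.scale)
      ultimately have "t * ys (T x) \<le> t * (norm x * ys e + \<epsilon>' * norm x * B)"
        unfolding nz by (simp add: algebra_simps)
      hence "ys (T x) \<le> norm x * ys e + \<epsilon>' * norm x * B" using t0 by simp
      moreover have "\<epsilon>' * norm x = \<epsilon> / (B+1)" unfolding \<epsilon>'_def using nx B0 by simp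
      hence "\<epsilon>' * norm x * B = \<epsilon> * (B / (B+1))" by simp
      moreover have "\<epsilon> * (B / (B+1)) \<le> \<epsilon>" using ep B0 by (simp add: mult_left_le field_simps)
      ultimately show "ys (T x) \<le> ys e * norm x + \<epsilon>" by (simp add: mult.commute)
    qed
  qed
qed

theorem mainTheorem12:
  fixes K :: "'b::real_normed_vector set" and e :: 'b
  assumes "pointed_closed_convex_cone K"
    and "e \<in> K - {0}"
  shows "((\<lambda>xs. (\<lambda>x. xs x *\<^sub>R e)) ` (dual_unit_ball :: ('a::real_normed_vector \<Rightarrow> real) set)
           \<subseteq> frechet_subdiff K (\<lambda>x::'a. norm x *\<^sub>R e) 0)
    \<and> (\<forall>ys \<in> dual_cone_e K e.
           (\<lambda>T. ys \<circ> T) ` frechet_subdiff K (\<lambda>x::'a. norm x *\<^sub>R e) 0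
             \<subseteq> (\<lambda>xs. (\<lambda>x. ys e * xs x)) ` (dual_unit_ball :: ('a \<Rightarrow> real) set))"
proof (intro conjI ballI subsetI)
  have eK: "e \<in> K" using assms(2) by simp
  have cc: "convex K" "cone K" using assms(1) by (auto simp: pointed_closed_convex_cone_def)
  hence addK: "\<And>a b. a \<in> K \<Longrightarrow> b \<in> K \<Longrightarrow> a + b \<in> K"
    and scK: "\<And>a c. a \<in> K \<Longrightarrow> c \<ge> 0 \<Longrightarrow> c *\<^sub>R a \<in> K"
    using convex_cone[of K] by blast+
  {
    fix S assume "S \<in> (\<lambda>xs. (\<lambda>x. xs x *\<^sub>R e)) ` (dual_unit_ball :: ('a \<Rightarrow> real) set)"
    then obtain xs where xs: "xs \<in> dual_unit_ball" and S: "S = (\<lambda>x. xs x *\<^sub>R e)" by blast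
    have bl: "bounded_linear xs" and on: "onorm xs \<le> 1" using xs by (auto simp: dual_unit_ball_def)
    have le: "xs x \<le> norm x" for x :: 'a
    proof -
      have "\<bar>xs x\<bar> \<le> onorm xs * norm x" using onorm[OF bl, of x] by simp
      also have "\<dots> \<le> norm x" using on by (simp add: mult_left_le_one_le onorm_pos_le[OF bl])
      finally show ?thesis by linarith
    qed
    have blS: "bounded_linear S" unfolding S
      using bounded_linear_scaleR_left[of e] bl by (rule bounded_linear_compose[of "\<lambda>r. r *\<^sub>R e"])
    show "S \<in> frechet_subdiff K (\<lambda>x::'a. norm x *\<^sub>R e) 0"
      unfolding frechet_subdiff_def
    proof (intro CollectI conjI allI impI blS)
      fix \<epsilon> :: real assume "\<epsilon> > 0"
      show "\<exists>\<delta>>0. \<forall>x\<in>ball 0 \<delta>. (\<lambda>k. norm x *\<^sub>R e + k) ` K \<subseteq>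
        {norm (0::'a) *\<^sub>R e + k + S (x - 0) + (\<epsilon> * norm (x - 0)) *\<^sub>R d | k d. k \<in> K \<and> norm d \<le> 1}"
      proof (intro exI[of _ 1] conjI ballI subsetI)
        fix x :: 'a and y assume "y \<in> (\<lambda>k. norm x *\<^sub>R e + k) ` K"
        then obtain k where k: "k \<in> K" and y: "y = norm x *\<^sub>R e + k" by blast
        have kk: "(norm x - xs x) *\<^sub>R e + k \<in> K" using addK[OF scK[OF eK] k] le[of x] by simp
        have "y = norm (0::'a) *\<^sub>R e + ((norm x - xs x) *\<^sub>R e + k) + S (x - 0) + (\<epsilon> * norm (x - 0)) *\<^sub>R 0"
          unfolding y S by (simp add: algebra_simps)
        thus "y \<in> {norm (0::'a) *\<^sub>R e + k + S (x - 0) + (\<epsilon> * norm (x - 0)) *\<^sub>R d | k d. k \<in> K \<and> norm d \<le> 1}"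
          using kk by fastforce
      qed simp
    qed
  }
  fix ys S assume ys: "ys \<in> dual_cone_e K e"
    and "S \<in> (\<lambda>T. ys \<circ> T) ` frechet_subdiff K (\<lambda>x::'a. norm x *\<^sub>R e) 0"
  then obtain T where T: "T \<in> frechet_subdiff K (\<lambda>x::'a. norm x *\<^sub>R e) 0" and S: "S = ys \<circ> T" by blast
  have ysd: "ys \<in> dual_cone K" and ne: "ys e \<noteq> 0" using ys by (auto simp: dual_cone_e_def)
  have blys: "bounded_linear ys" using ysd by (simp add: dual_cone_def)
  have "ys e \<ge> 0" using ysd eK by (simp add: dual_cone_def)
  hence c: "ys e > 0" using ne by simp
  have blT: "bounded_linear T" using T by (simp add: frechet_subdiff_def)
  interpret T: bounded_linear T by fact
  interpret Y: bounded_linear ys by fact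
  have ab: "\<bar>ys (T x)\<bar> \<le> ys e * norm x" for x
    using key_bound[OF assms(1) eK T ysd, of x] key_bound[OF assms(1) eK T ysd, of "-x"]
    by (simp add: T.neg Y.neg)
  define xs where "xs = (\<lambda>x. ys (T x) / ys e)"
  have blxs: "bounded_linear xs" unfolding xs_def
    by (rule bounded_linear_compose[OF bounded_linear_divide bounded_linear_compose[OF blys blT]])
  have "onorm xs \<le> 1"
  proof (rule onorm_bound)
    fix x show "norm (xs x) \<le> 1 * norm x"
      using ab[of x] c unfolding xs_def by (simp add: divide_le_eq abs_divide mult.commute)
  qed simp
  hence "xs \<in> dual_unit_ball" using blxs by (simp add: dual_unit_ball_def)
  moreover have "S = (\<lambda>x. ys e * xs x)" unfolding S xs_def using c by (auto simp: fun_eq_iff)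
  ultimately show "S \<in> (\<lambda>xs. (\<lambda>x. ys e * xs x)) ` (dual_unit_ball :: ('a \<Rightarrow> real) set)" by blast
qed

end
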